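(* Let $k\ge 2$ and let $G$ be the chain graph on $\{o_1,\dots,o_{k-1}\}\cup\{c_1,\dots,c_k\}$ with $E(G)=\bigcup_{m=1}^{k-1}\{\{o_m,c_m\},\{o_m,c_{m+1}\}\}$. Let $1\le i<j\le k$, so that the client proximity is $d(c_i,c_j)=j-i$. Starting from $G$, apply successively, for $m=i,i+1,\dots,j-1$, the $\sigma_x$-measurement rule at $o_m$ with support vertex $b_0=c_{m+1}$, i.e. replace the current graph $H$ by $\tau_{c_{m+1}}\big(\tau_{o_m}(\tau_{c_{m+1}}(H))-o_m\big)$. Then these $d(c_i,c_j)$ operations are well defined (at each step $c_{m+1}$ is a neighbour of $o_m$ in the current graph) and in the resulting graph the vertices $c_i$ and $c_j$ are adjacent. Equivalently, $d(c_i,c_j)$ single-qubit $\sigma_x$-measurements on orchestrator qubits of the chain graph state create, up to local unitaries, a graph state in which $c_i$ and $c_j$ are joined by an edge.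
   Context: All graphs are finite, simple and undirected. For a graph $H=(V,E)$ and $a\in V$, $N_a=\{b:\{a,b\}\in E\}$; $\tau_a(H)$ (local complementation) toggles the edge $\{b,c\}$ for every pair of distinct $b,c\in N_a$ and leaves the other edges unchanged; $H-a$ deletes $a$ and its incident edges. Graph state: $\ket{H}=\prod_{\{a,b\}\in E}\mathrm{CZ}_{ab}\ket{+}^{\otimes|V|}$. Measurement rules (up to local unitaries): $\sigma_z$ at $a$ gives $H-a$; $\sigma_y$ at $a$ gives $\tau_a(H)-a$; $\sigma_x$ at $a$ with chosen $b_0\in N_a$ gives $\tau_{b_0}(\tau_a(\tau_{b_0}(H))-a)$. A client vertex (one of the $c$'s) is a bridge if it is adjacent to more than one orchestrator vertex (one of the $o$'s). The proximity $d(c,c')$ of two distinct clients is $1$ plus the number of bridges lying strictly between $c$ and $c'$ on a shortest $c$–$c'$ path in $G$; for the chain graph, $d(c_i,c_j)=|j-i|$. *)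

theory Defs
  imports Main
begin

text \<open>Finite simple graphs: a vertex set together with a set of edges,
each edge being a two-element subset of the vertex set.\<close>

type_synonym 'a graph = "'a set \<times> 'a set set"

definition verts :: "'a graph \<Rightarrow> 'a set" where "verts H = fst H"
definition edges :: "'a graph \<Rightarrow> 'a set set" where "edges H = snd H"

definition nbhd :: "'a graph \<Rightarrow> 'a \<Rightarrow> 'a set" where
  "nbhd H a = {b. {a, b} \<in> edges H}"

definition loc_comp :: "'a \<Rightarrow> 'a graph \<Rightarrow> 'a graph" where
  "loc_comp a H =
     (let P = {{b, c} | b c. b \<in> nbhd H a \<and> c \<in> nbhd H a \<and> b \<noteq> c}
      in (verts H, (edges H - P) \<union> (P - edges H)))"

definition del_vertex :: "'a \<Rightarrow> 'a graph \<Rightarrow> 'a graph" where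
  "del_vertex a H = (verts H - {a}, {e \<in> edges H. a \<notin> e})"

definition meas_x :: "'a \<Rightarrow> 'a \<Rightarrow> 'a graph \<Rightarrow> 'a graph" where
  "meas_x a b0 H = loc_comp b0 (del_vertex a (loc_comp a (loc_comp b0 H)))"

datatype vtx = Orch nat | Client nat

definition chain_graph :: "nat \<Rightarrow> vtx graph" where
  "chain_graph k =
     ({Orch m | m. 1 \<le> m \<and> m \<le> k - 1} \<union> {Client m | m. 1 \<le> m \<and> m \<le> k},
      (\<Union>m\<in>{1..k-1}. {{Orch m, Client m}, {Orch m, Client (Suc m)}}))"

definition after_meas :: "nat \<Rightarrow> nat \<Rightarrow> nat \<Rightarrow> vtx graph" where
  "after_meas k i m = fold (\<lambda>l H. meas_x (Orch l) (Client (Suc l)) H) [i..<m] (chain_graph k)"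

end

theory Submission
  imports Defs
begin

definition lcE :: "'a \<Rightarrow> 'a set set \<Rightarrow> 'a set set" where
  "lcE a E = (let P = {{b, c} | b c. b \<in> {x. {a,x} \<in> E} \<and> c \<in> {x. {a,x} \<in> E} \<and> b \<noteq> c}
      in (E - P) \<union> (P - E))"

lemma edges_lc: "edges (loc_comp a H) = lcE a (edges H)"
  by (simp add: loc_comp_def lcE_def edges_def nbhd_def Let_def)

lemma edges_del: "edges (del_vertex a H) = {e \<in> edges H. a \<notin> e}"
  by (simp add: del_vertex_def edges_def)

lemma edges_mx: "edges (meas_x a b H) = lcE b {e \<in> lcE a (lcE b (edges H)). a \<notin> e}"
  by (simp add: meas_x_def edges_lc edges_del)

lemma lcE1: "{x. {a,x} \<in> E} = {y} \<Longrightarrow> lcE a E = E"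
  unfolding lcE_def Let_def by auto

lemma lcE2: "{x. {a,x} \<in> E} = {y,z} \<Longrightarrow> y \<noteq> z \<Longrightarrow>
   lcE a E = (E - {{y,z}}) \<union> ({{y,z}} - E)"
  unfolding lcE_def Let_def
  apply (rule arg_cong2[where f="\<lambda>A B. (E - A) \<union> (B - E)"])
  by (auto simp: insert_commute)

lemma lcE3: "{x. {a,x} \<in> E} = {x,y,z} \<Longrightarrow> x \<noteq> y \<Longrightarrow> x \<noteq> z \<Longrightarrow> y \<noteq> z \<Longrightarrow>
   lcE a E = (E - {{x,y},{x,z},{y,z}}) \<union> ({{x,y},{x,z},{y,z}} - E)"
  unfolding lcE_def Let_def
  apply (rule arg_cong2[where f="\<lambda>A B. (E - A) \<union> (B - E)"])
  by (auto simp: insert_commute)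

definition F :: "nat \<Rightarrow> nat \<Rightarrow> nat \<Rightarrow> vtx set set" where
  "F k i m = (\<Union>l\<in>{l. 1 \<le> l \<and> l \<le> k - 1 \<and> (l < i \<or> m < l)}. {{Orch l, Client l}, {Orch l, Client (Suc l)}})
     \<union> {{Client i, Client l} | l. i < l \<and> l \<le> m}
     \<union> (if m < k then {{Orch m, Client i}, {Orch m, Client (Suc m)}} else {})"

lemma base_chain: "1 \<le> i \<Longrightarrow> i < k \<Longrightarrow> edges (chain_graph k) = F k i i"
  unfolding edges_def
proof (intro set_eqI iffI)
  fix x assume i: "1 \<le> i" "i < k"
  assume "x \<in> snd (chain_graph k)"
  then obtain l where l: "l \<in> {1..k-1}" "x = {Orch l, Client l} \<or> x = {Orch l, Client (Suc l)}"
    by (auto simp: chain_graph_def)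
  show "x \<in> F k i i"
  proof (cases "l = i")
    case True then show ?thesis using l i by (auto simp: F_def)
  next
    case False then show ?thesis using l i unfolding F_def
      by (intro UnI1) (auto simp: linorder_neq_iff)
  qed
next
  fix x assume i: "1 \<le> i" "i < k"
  assume "x \<in> F k i i"
  then show "x \<in> snd (chain_graph k)" using i
    by (auto simp: chain_graph_def F_def)
qed

definition ch :: "nat set \<Rightarrow> vtx set set" where
  "ch S = (\<Union>l\<in>S. {{Orch l, Client l}, {Orch l, Client (Suc l)}})"
definition Cl :: "nat \<Rightarrow> nat \<Rightarrow> vtx set set" where
  "Cl i m = {{Client i, Client l} | l. i < l \<and> l \<le> m}"

lemma F_alt: "F k i m = ch {l. 1 \<le> l \<and> l \<le> k - 1 \<and> (l < i \<or> m < l)} \<union> Cl i m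
     \<union> (if m < k then {{Orch m, Client i}, {Orch m, Client (Suc m)}} else {})"
  by (simp add: F_def ch_def Cl_def)

lemma Lsplit: "1 \<le> i \<Longrightarrow> i \<le> m \<Longrightarrow> Suc m < k \<Longrightarrow>
  {l. 1 \<le> l \<and> l \<le> k - 1 \<and> (l < i \<or> m < l)} = insert (Suc m) {l. 1 \<le> l \<and> l \<le> k - 1 \<and> (l < i \<or> Suc m < l)}"
  by auto

lemma Lsame: "1 \<le> i \<Longrightarrow> i \<le> m \<Longrightarrow> Suc m = k \<Longrightarrow>
  {l. 1 \<le> l \<and> l \<le> k - 1 \<and> (l < i \<or> m < l)} = {l. 1 \<le> l \<and> l \<le> k - 1 \<and> (l < i \<or> Suc m < l)}"
  by auto

lemma ch_insert: "ch (insert l S) = {{Orch l, Client l}, {Orch l, Client (Suc l)}} \<union> ch S"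
  by (simp add: ch_def)

lemma mem_ch: "x \<in> ch S \<longleftrightarrow> (\<exists>l\<in>S. x = {Orch l, Client l} \<or> x = {Orch l, Client (Suc l)})"
  by (auto simp: ch_def)

lemma mem_Cl: "x \<in> Cl i m \<longleftrightarrow> (\<exists>l. i < l \<and> l \<le> m \<and> x = {Client i, Client l})"
  by (auto simp: Cl_def)

lemma stepA:
  assumes "1 \<le> i" "i \<le> m" "Suc m < k"
  shows "lcE (Client (Suc m)) {e \<in> lcE (Orch m) (lcE (Client (Suc m)) (F k i m)). Orch m \<notin> e}
         = F k i (Suc m)"
proof -
  have N1: "{x. {Client (Suc m), x} \<in> F k i m} = {Orch m, Orch (Suc m)}"
    using assms apply (auto simp: F_def doubleton_eq_iff)
    apply (erule allE[of _ "Suc m"]) by simp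
  define E1 where "E1 = (F k i m - {{Orch m, Orch (Suc m)}}) \<union> ({{Orch m, Orch (Suc m)}} - F k i m)"
  have e1: "lcE (Client (Suc m)) (F k i m) = E1"
    unfolding E1_def by (rule lcE2[OF N1]) simp
  have N2: "{x. {Orch m, x} \<in> E1} = {Client i, Client (Suc m), Orch (Suc m)}"
    using assms unfolding E1_def by (auto simp: F_def doubleton_eq_iff)
  define P where "P = {{Client i, Client (Suc m)}, {Client i, Orch (Suc m)}, {Client (Suc m), Orch (Suc m)}}"
  have e2: "lcE (Orch m) E1 = (E1 - P) \<union> (P - E1)"
    unfolding P_def by (rule lcE3[OF N2]) (use assms in auto)
  define E3 where "E3 = {e \<in> (E1 - P) \<union> (P - E1). Orch m \<notin> e}"
  have N3: "{x. {Client (Suc m), x} \<in> E3} = {Client i}"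
    using assms unfolding E3_def E1_def P_def apply (auto simp: F_def doubleton_eq_iff)
    apply (erule allE[of _ "Suc m"]) by simp
  have nF1: "{Orch m, Orch (Suc m)} \<notin> F k i m"
    by (auto simp: F_def doubleton_eq_iff)
  have p1: "{Client (Suc m), Orch (Suc m)} \<in> F k i m"
  proof -
    have "{Orch (Suc m), Client (Suc m)} \<in> ch {l. 1 \<le> l \<and> l \<le> k - 1 \<and> (l < i \<or> m < l)}"
      unfolding mem_ch using assms by (intro bexI[of _ "Suc m"]) auto
    then show ?thesis by (simp add: F_alt insert_commute)
  qed
  have p2: "{Client i, Client (Suc m)} \<notin> F k i m"
    using assms by (auto simp: F_def doubleton_eq_iff)
  have p3: "{Client i, Orch (Suc m)} \<notin> F k i m"
    using assms by (auto simp: F_def doubleton_eq_iff)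
  have E3eq: "E3 = {x \<in> F k i m. Orch m \<notin> x \<and> x \<noteq> {Client (Suc m), Orch (Suc m)}}
      \<union> {{Client i, Client (Suc m)}, {Client i, Orch (Suc m)}}"
    unfolding E3_def E1_def P_def using nF1 p1 p2 p3 by auto
  have ClS: "Cl i (Suc m) = insert {Client i, Client (Suc m)} (Cl i m)"
    using assms by (auto simp: Cl_def le_Suc_eq)
  define L' where "L' = {l. 1 \<le> l \<and> l \<le> k - 1 \<and> (l < i \<or> Suc m < l)}"
  have a1: "\<And>x. x \<in> ch L' \<Longrightarrow> Orch m \<in> x \<Longrightarrow> False"
    using assms unfolding L'_def mem_ch by (auto simp: doubleton_eq_iff)
  have a2: "{Client (Suc m), Orch (Suc m)} \<in> ch L' \<Longrightarrow> False"
    using assms unfolding L'_def mem_ch by (auto simp: doubleton_eq_iff)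
  have b1: "\<And>x. x \<in> Cl i m \<Longrightarrow> Orch m \<in> x \<Longrightarrow> False"
    unfolding mem_Cl by (auto simp: doubleton_eq_iff)
  have b2: "{Client (Suc m), Orch (Suc m)} \<in> Cl i m \<Longrightarrow> False"
    unfolding mem_Cl by (auto simp: doubleton_eq_iff)
  have Fm: "F k i m = ({{Orch (Suc m), Client (Suc m)}, {Orch (Suc m), Client (Suc (Suc m))}} \<union> ch L')
      \<union> Cl i m \<union> {{Orch m, Client i}, {Orch m, Client (Suc m)}}"
    using assms unfolding F_alt Lsplit[OF assms] ch_insert L'_def by simp
  have FSm: "F k i (Suc m) = ch L' \<union> insert {Client i, Client (Suc m)} (Cl i m)
      \<union> {{Orch (Suc m), Client i}, {Orch (Suc m), Client (Suc (Suc m))}}"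
    using assms unfolding F_alt ClS L'_def by simp
  have q1: "{Orch (Suc m), Client (Suc m)} = {Client (Suc m), Orch (Suc m)}"
    by (simp add: insert_commute)
  have q2: "{Orch (Suc m), Client (Suc (Suc m))} \<noteq> {Client (Suc m), Orch (Suc m)}"
    by (simp add: doubleton_eq_iff)
  have q3: "Orch m \<notin> {Orch (Suc m), Client (Suc (Suc m))}" by simp
  have q4: "{Client i, Orch (Suc m)} = {Orch (Suc m), Client i}"
    by (simp add: insert_commute)
  have e3: "E3 = F k i (Suc m)"
    unfolding E3eq Fm FSm q4
    using a1 a2 b1 b2 q1 q2 q3 by blast
  show ?thesis using e1 e2 lcE1[OF N3] e3 unfolding E3_def by simp
qed

lemma stepB:
  assumes "1 \<le> i" "i \<le> m" "Suc m = k"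
  shows "lcE (Client (Suc m)) {e \<in> lcE (Orch m) (lcE (Client (Suc m)) (F k i m)). Orch m \<notin> e}
         = F k i (Suc m)"
proof -
  define L' where "L' = {l. 1 \<le> l \<and> l \<le> k - 1 \<and> (l < i \<or> Suc m < l)}"
  have Fm: "F k i m = ch L' \<union> Cl i m \<union> {{Orch m, Client i}, {Orch m, Client (Suc m)}}"
    using assms unfolding F_alt Lsame[OF assms] L'_def by simp
  have ClS: "Cl i (Suc m) = insert {Client i, Client (Suc m)} (Cl i m)"
    using assms by (auto simp: Cl_def le_Suc_eq)
  have FSm: "F k i (Suc m) = ch L' \<union> insert {Client i, Client (Suc m)} (Cl i m)"
    using assms unfolding F_alt ClS L'_def by simp
  have a1: "\<And>x. x \<in> ch L' \<Longrightarrow> Orch m \<in> x \<Longrightarrow> False"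
    using assms unfolding L'_def mem_ch by (auto simp: doubleton_eq_iff)
  have a3: "\<And>x. x \<in> ch L' \<Longrightarrow> Client (Suc m) \<in> x \<Longrightarrow> False"
    using assms unfolding L'_def mem_ch by (auto simp: doubleton_eq_iff)
  have b1: "\<And>x. x \<in> Cl i m \<Longrightarrow> Orch m \<in> x \<Longrightarrow> False"
    unfolding mem_Cl by (auto simp: doubleton_eq_iff)
  have b3: "\<And>x. x \<in> Cl i m \<Longrightarrow> Client (Suc m) \<in> x \<Longrightarrow> False"
    using assms unfolding mem_Cl by (auto simp: doubleton_eq_iff)
  have a4: "\<And>x. x \<in> ch L' \<Longrightarrow> x = {Orch m, y} \<Longrightarrow> False" for y
    using a1 by blast
  have b4: "\<And>x. x \<in> Cl i m \<Longrightarrow> x = {Orch m, y} \<Longrightarrow> False" for y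
    using b1 by blast
  have a5: "\<And>x. x \<in> ch L' \<Longrightarrow> x = {Client (Suc m), y} \<Longrightarrow> False" for y
    using a3 by blast
  have b5: "\<And>x. x \<in> Cl i m \<Longrightarrow> x = {Client (Suc m), y} \<Longrightarrow> False" for y
    using b3 by blast
  have ne: "Client i \<noteq> Client (Suc m)" using assms by simp
  have N1: "{x. {Client (Suc m), x} \<in> F k i m} = {Orch m}"
    unfolding Fm using a5 b5 ne by (auto simp: doubleton_eq_iff)
  have e1: "lcE (Client (Suc m)) (F k i m) = F k i m" by (rule lcE1[OF N1])
  have N2: "{x. {Orch m, x} \<in> F k i m} = {Client i, Client (Suc m)}"
    unfolding Fm using a4 b4 by (auto simp: doubleton_eq_iff)
  have e2: "lcE (Orch m) (F k i m) = (F k i m - {{Client i, Client (Suc m)}}) \<union> ({{Client i, Client (Suc m)}} - F k i m)"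
    by (rule lcE2[OF N2 ne])
  have nF: "{Client i, Client (Suc m)} \<notin> F k i m"
    unfolding Fm using a3[of "{Client i, Client (Suc m)}"] b3[of "{Client i, Client (Suc m)}"] ne
    by (auto simp: doubleton_eq_iff)
  have q: "Orch m \<notin> {Client i, Client (Suc m)}" by simp
  have E3: "{e \<in> lcE (Orch m) (F k i m). Orch m \<notin> e} = F k i (Suc m)"
    unfolding e2 FSm using nF q unfolding Fm using a1 b1 by blast
  have N3: "{x. {Client (Suc m), x} \<in> F k i (Suc m)} = {Client i}"
    unfolding FSm using a5 b5 ne by (auto simp: doubleton_eq_iff)
  show ?thesis unfolding e1 E3 by (rule lcE1[OF N3])
qed

lemma after_Suc: "i \<le> n \<Longrightarrow> after_meas k i (Suc n) = meas_x (Orch n) (Client (Suc n)) (after_meas k i n)"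
  by (simp add: after_meas_def)

lemma after_base: "after_meas k i i = chain_graph k"
  by (simp add: after_meas_def)

lemma inv: assumes "1 \<le> i" "i < k" shows "i \<le> m \<Longrightarrow> m \<le> k \<Longrightarrow> edges (after_meas k i m) = F k i m"
proof (induction m rule: dec_induct)
  case base
  then show ?case using assms by (simp add: after_base base_chain)
next
  case (step n)
  then have IH: "edges (after_meas k i n) = F k i n" by simp
  note step = step assms
  have "edges (after_meas k i (Suc n)) =
     lcE (Client (Suc n)) {e \<in> lcE (Orch n) (lcE (Client (Suc n)) (F k i n)). Orch n \<notin> e}"
    using step by (simp add: after_Suc edges_mx IH)
  also have "\<dots> = F k i (Suc n)"
  proof (cases "Suc n < k")
    case True then show ?thesis using step by (intro stepA) auto
  next
    case False then show ?thesis using step by (intro stepB) auto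
  qed
  finally show ?case .
qed

theorem lemma3:
  fixes k i j :: nat
  assumes "k \<ge> 2" and "1 \<le> i" and "i < j" and "j \<le> k"
  shows "(\<forall>m\<in>{i..<j}. Client (Suc m) \<in> nbhd (after_meas k i m) (Orch m))
         \<and> {Client i, Client j} \<in> edges (after_meas k i j)"
proof
  show "\<forall>m\<in>{i..<j}. Client (Suc m) \<in> nbhd (after_meas k i m) (Orch m)"
  proof
    fix m assume m: "m \<in> {i..<j}"
    have "edges (after_meas k i m) = F k i m" using assms m by (intro inv) auto
    moreover have "m < k" using m assms by auto
    ultimately show "Client (Suc m) \<in> nbhd (after_meas k i m) (Orch m)"
      by (simp add: nbhd_def F_def)
  qed
next
  have "edges (after_meas k i j) = F k i j" using assms by (intro inv) auto
  moreover have "{Client i, Client j} \<in> Cl i j" using assms by (auto simp: mem_Cl)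
  ultimately show "{Client i, Client j} \<in> edges (after_meas k i j)"
    by (simp add: F_alt)
qed

end
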